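(* Let $p\ge 2$ be an integer, $r=p-1$, and $h=1/n$ a mesh size. Let $\mathbf F^{(L)}:[-1,0]\times[0,1]\to\mathbb R^2$ and $\mathbf F^{(R)}:[0,1]\times[0,1]\to\mathbb R^2$ have each component in $\mathcal S^p_{p-1}$ of its parameter domain, have non-vanishing Jacobian determinant on their closed parameter domains, have images $\Omega^{(L)},\Omega^{(R)}$ with disjoint interiors, and satisfy $\mathbf F^{(L)}(0,v)=\mathbf F^{(R)}(0,v)=:\mathbf F_0(v)$ for $v\in[0,1]$. Let $\Omega=\Omega^{(L)}\cup\Omega^{(R)}$, $\Gamma=\Omega^{(L)}\cap\Omega^{(R)}$, and assume $\mathbf F^{(L)},\mathbf F^{(R)}$ are analysis-suitable $G^1$-continuous at $\Gamma$ with linear coefficients $\alpha^{(L)},\alpha^{(R)},\beta^{(L)},\beta^{(R)}$. Let $\mathcal G_0,\mathcal G_1$ be linear spaces of functions on $[0,1]$ with $\mathcal G_0\times\mathcal G_1\subseteq\widehat{\mathcal V^1_\Gamma}$. Then: (i) if $\beta^{(L)}$ or $\beta^{(R)}$ is not identically zero, the dimension of $\mathcal G_0$ is bounded independently of $h$; (ii) if $\alpha^{(L)}$ and $\alpha^{(R)}$ are linearly independent, the dimension of $\mathcal G_1$ is bounded independently of $h$.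
   Context: Spline spaces: on $[0,1]$ take the uniform knots $0,h,\dots,1$; $\mathcal S^q_s([0,1])$ is the space of piecewise polynomials of degree at most $q$ on the knot intervals that are $C^s$ at interior knots (global polynomials of degree $\le q$ if $s\ge q$); analogously on $[-1,0]$, and on rectangles $[a,a+1]\times[0,1]$ $\mathcal S^q_s$ is the tensor product of the univariate spaces. $\mathcal V=\{\phi:\Omega\to\mathbb R:\ \phi\circ\mathbf F^{(S)}\in\mathcal S^p_{p-1}\text{ of the parameter domain of }\mathbf F^{(S)},\ S\in\{L,R\}\}$, $\mathcal V^1=\mathcal V\cap C^1(\Omega)$. Analysis-suitable $G^1$-continuity: there exist $\alpha^{(L)},\alpha^{(R)},\beta^{(L)},\beta^{(R)}$, polynomials of degree at most $1$ on $[0,1]$, with $\alpha^{(L)}(v)\alpha^{(R)}(v)>0$ for all $v$, such that for all $v\in[0,1]$: $\alpha^{(R)}(v)D_u\mathbf F^{(L)}(0,v)-\alpha^{(L)}(v)D_u\mathbf F^{(R)}(0,v)=(\alpha^{(R)}(v)\beta^{(L)}(v)-\alpha^{(L)}(v)\beta^{(R)}(v))D_v\mathbf F_0(v)$. Transversal vector on $\Gamma$: $\mathbf d(\mathbf F_0(v))=\frac{1}{\alpha^{(L)}(v)}(D_u\mathbf F^{(L)}(0,v)-\beta^{(L)}(v)D_v\mathbf F_0(v))$. Trace space: $\widehat{\mathcal V^1_\Gamma}=\{v\mapsto[\phi(\mathbf F_0(v)),(\nabla\phi\cdot\mathbf d)(\mathbf F_0(v))]:\phi\in\mathcal V^1\}$.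 *)

theory Defs
  imports "HOL-Analysis.Analysis" "HOL-Computational_Algebra.Polynomial"
begin

text \<open>If s \<ge> q this
  forces a single global polynomial.  Only the values on [a,a+1] matter.\<close>
definition spline1 :: "nat \<Rightarrow> nat \<Rightarrow> nat \<Rightarrow> real \<Rightarrow> (real \<Rightarrow> real) \<Rightarrow> bool" where
  "spline1 q s n a f \<longleftrightarrow>
     (\<exists>P :: nat \<Rightarrow> real poly.
        (\<forall>k<n. degree (P k) \<le> q \<and>
              (\<forall>x\<in>{a + real k / real n .. a + real (Suc k) / real n}. f x = poly (P k) x)) \<and>
        (\<forall>k. 0 < k \<and> k < n \<longrightarrow>
              (\<forall>j\<le>s. poly ((pderiv ^^ j) (P (k - 1))) (a + real k / real n)
                     = poly ((pderiv ^^ j) (P k)) (a + real k / real n))))"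

definition spline2 :: "nat \<Rightarrow> nat \<Rightarrow> nat \<Rightarrow> real \<Rightarrow> (real \<times> real \<Rightarrow> real) \<Rightarrow> bool" where
  "spline2 q s n a \<Phi> \<longleftrightarrow>
     (\<exists>(m::nat) (f::nat \<Rightarrow> real \<Rightarrow> real) (g::nat \<Rightarrow> real \<Rightarrow> real).
        (\<forall>i<m. spline1 q s n a (f i) \<and> spline1 q s n 0 (g i)) \<and>
        (\<forall>u\<in>{a..a+1}. \<forall>v\<in>{0..1}. \<Phi> (u, v) = (\<Sum>i<m. f i u * g i v)))"

definition rect :: "real \<Rightarrow> (real \<times> real) set" where
  "rect a = {a..a+1} \<times> {0..1}"

definition Du :: "real \<Rightarrow> (real \<times> real \<Rightarrow> real \<times> real) \<Rightarrow> real \<times> real \<Rightarrow> real \<times> real" where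
  "Du a F x = vector_derivative (\<lambda>t. F (t, snd x)) (at (fst x) within {a..a+1})"

definition Dv :: "(real \<times> real \<Rightarrow> real \<times> real) \<Rightarrow> real \<times> real \<Rightarrow> real \<times> real" where
  "Dv F x = vector_derivative (\<lambda>t. F (fst x, t)) (at (snd x) within {0..1})"

definition jacdet :: "real \<Rightarrow> (real \<times> real \<Rightarrow> real \<times> real) \<Rightarrow> real \<times> real \<Rightarrow> real" where
  "jacdet a F x = fst (Du a F x) * snd (Dv F x) - snd (Du a F x) * fst (Dv F x)"

definition patch :: "nat \<Rightarrow> nat \<Rightarrow> real \<Rightarrow> (real \<times> real \<Rightarrow> real \<times> real) \<Rightarrow> bool" where
  "patch p n a F \<longleftrightarrow>
     spline2 p (p - 1) n a (\<lambda>x. fst (F x)) \<and> spline2 p (p - 1) n a (\<lambda>x. snd (F x)) \<and>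
     (\<forall>x\<in>rect a. jacdet a F x \<noteq> 0)"

definition F0 :: "(real \<times> real \<Rightarrow> real \<times> real) \<Rightarrow> real \<Rightarrow> real \<times> real" where
  "F0 FL v = FL (0, v)"

definition DF0 :: "(real \<times> real \<Rightarrow> real \<times> real) \<Rightarrow> real \<Rightarrow> real \<times> real" where
  "DF0 FL v = vector_derivative (F0 FL) (at v within {0..1})"

definition Omega :: "(real \<times> real \<Rightarrow> real \<times> real) \<Rightarrow> (real \<times> real \<Rightarrow> real \<times> real) \<Rightarrow> (real \<times> real) set" where
  "Omega FL FR = FL ` rect (-1) \<union> FR ` rect 0"

definition AS_G1 :: "(real \<times> real \<Rightarrow> real \<times> real) \<Rightarrow> (real \<times> real \<Rightarrow> real \<times> real) \<Rightarrow>
    real poly \<Rightarrow> real poly \<Rightarrow> real poly \<Rightarrow> real poly \<Rightarrow> bool" where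
  "AS_G1 FL FR aL aR bL bR \<longleftrightarrow>
     degree aL \<le> 1 \<and> degree aR \<le> 1 \<and> degree bL \<le> 1 \<and> degree bR \<le> 1 \<and>
     (\<forall>v\<in>{0..1}. poly aL v * poly aR v > 0) \<and>
     (\<forall>v\<in>{0..1}. poly aR v *\<^sub>R Du (-1) FL (0, v) - poly aL v *\<^sub>R Du 0 FR (0, v)
                  = (poly aR v * poly bL v - poly aL v * poly bR v) *\<^sub>R DF0 FL v)"

definition dvec :: "(real \<times> real \<Rightarrow> real \<times> real) \<Rightarrow> real poly \<Rightarrow> real poly \<Rightarrow> real \<Rightarrow> real \<times> real" where
  "dvec FL aL bL v = (1 / poly aL v) *\<^sub>R (Du (-1) FL (0, v) - poly bL v *\<^sub>R DF0 FL v)"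

definition Vsp :: "nat \<Rightarrow> nat \<Rightarrow> (real \<times> real \<Rightarrow> real \<times> real) \<Rightarrow> (real \<times> real \<Rightarrow> real \<times> real) \<Rightarrow>
    (real \<times> real \<Rightarrow> real) \<Rightarrow> bool" where
  "Vsp p n FL FR \<phi> \<longleftrightarrow> spline2 p (p - 1) n (-1) (\<phi> \<circ> FL) \<and> spline2 p (p - 1) n 0 (\<phi> \<circ> FR)"

definition C1_grad :: "(real \<times> real) set \<Rightarrow> (real \<times> real \<Rightarrow> real) \<Rightarrow> (real \<times> real \<Rightarrow> real \<times> real) \<Rightarrow> bool" where
  "C1_grad S \<phi> G \<longleftrightarrow> continuous_on S G \<and>
     (\<forall>x\<in>S. (\<phi> has_derivative (\<lambda>y. G x \<bullet> y)) (at x within S))"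

text \<open>Trace space of V^1 = V \<inter> C^1(Omega) on Gamma; functions on [0,1] are represented
  extensionally (zero outside [0,1]).\<close>
definition trace_space :: "nat \<Rightarrow> nat \<Rightarrow> (real \<times> real \<Rightarrow> real \<times> real) \<Rightarrow> (real \<times> real \<Rightarrow> real \<times> real) \<Rightarrow>
    real poly \<Rightarrow> real poly \<Rightarrow> ((real \<Rightarrow> real) \<times> (real \<Rightarrow> real)) set" where
  "trace_space p n FL FR aL bL =
     {(g0, g1). \<exists>\<phi> G. Vsp p n FL FR \<phi> \<and> C1_grad (Omega FL FR) \<phi> G \<and>
        (\<forall>v. g0 v = (if v \<in> {0..1} then \<phi> (F0 FL v) else 0)) \<and>
        (\<forall>v. g1 v = (if v \<in> {0..1} then G (F0 FL v) \<bullet> dvec FL aL bL v else 0))}"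

definition lin_space :: "(real \<Rightarrow> real) set \<Rightarrow> bool" where
  "lin_space V \<longleftrightarrow> (\<lambda>x. 0) \<in> V \<and> (\<forall>f\<in>V. \<forall>g\<in>V. (\<lambda>x. f x + g x) \<in> V) \<and>
     (\<forall>c. \<forall>f\<in>V. (\<lambda>x. c * f x) \<in> V)"

definition lin_indep :: "(real \<Rightarrow> real) set \<Rightarrow> bool" where
  "lin_indep B \<longleftrightarrow> (\<forall>c. (\<forall>x. (\<Sum>b\<in>B. c b * b x) = 0) \<longrightarrow> (\<forall>b\<in>B. c b = 0))"

definition dim_atmost :: "(real \<Rightarrow> real) set \<Rightarrow> nat \<Rightarrow> bool" where
  "dim_atmost V N \<longleftrightarrow> (\<forall>B. B \<subseteq> V \<and> finite B \<and> lin_indep B \<longrightarrow> card B \<le> N)"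

end

theory Submission
  imports Defs "HOL-Library.Function_Algebras"
begin

lemma deg0_zero: "degree (W::real poly) = 0 \<Longrightarrow> poly W t = 0 \<Longrightarrow> W = 0"
  by (erule degree_eq_zeroE) simp

lemma pderiv_shift: "(pderiv ^^ j) (pderiv D) = (pderiv ^^ Suc j) D"
  by (simp only: funpow_Suc_right comp_def)

lemma higher_pderiv_diff: "(pderiv ^^ n) ((P::real poly) - Q) = (pderiv ^^ n) P - (pderiv ^^ n) Q"
  by (induction n arbitrary: P Q) (simp_all del: funpow.simps add: funpow_Suc_right pderiv_diff)

lemma polyZ:
  fixes R :: "real poly"
  assumes "degree R \<le> m" "\<forall>j\<le>m. poly ((pderiv ^^ j) R) t = 0"
  shows "R = 0"
proof -
  have "\<forall>i\<le>m. (pderiv ^^ (m - i)) R = 0"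
  proof (intro allI impI)
    fix i assume "i \<le> m"
    then show "(pderiv ^^ (m - i)) R = 0"
    proof (induction i)
      case 0
      have "degree ((pderiv ^^ m) R) = 0" using assms(1) by (simp add: degree_higher_pderiv)
      then show ?case using assms(2) deg0_zero by auto
    next
      case (Suc i)
      then have h: "(pderiv ^^ (m - i)) R = 0" by simp
      have e: "m - i = Suc (m - Suc i)" using Suc.prems by simp
      have "pderiv ((pderiv ^^ (m - Suc i)) R) = 0" using h unfolding e by simp
      then have "degree ((pderiv ^^ (m - Suc i)) R) = 0" using pderiv_eq_0_iff by blast
      moreover have "poly ((pderiv ^^ (m - Suc i)) R) t = 0" using assms(2) by simp
      ultimately show ?case using deg0_zero by blast
    qed
  qed
  then have "(pderiv ^^ (m - m)) R = 0" by blast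
  then show ?thesis by simp
qed

lemma polyDiv:
  fixes D :: "real poly"
  assumes "\<forall>j<m. poly ((pderiv ^^ j) D) t = 0"
  shows "[:-t,1:]^m dvd D"
  using assms
proof (induction m arbitrary: D)
  case 0 then show ?case by simp
next
  case (Suc m)
  have "\<forall>j<m. poly ((pderiv ^^ j) (pderiv D)) t = 0"
    using Suc.prems by (simp only: pderiv_shift) auto
  then have d1: "[:-t,1:]^m dvd pderiv D" using Suc.IH by blast
  have r: "poly D t = 0" using Suc.prems by (metis funpow_0 zero_less_Suc)
  show ?case
  proof (cases "D = 0")
    case True then show ?thesis by simp
  next
    case False
    have "pderiv D \<noteq> 0"
    proof
      assume "pderiv D = 0"
      then have "degree D = 0" using pderiv_eq_0_iff by blast
      then show False using False r deg0_zero by blast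
    qed
    then have "m \<le> order t (pderiv D)" using d1 order_divides by blast
    moreover have "order t D = Suc (order t (pderiv D))" using order_pderiv False r by blast
    ultimately show ?thesis using order_divides by (metis Suc_le_mono)
  qed
qed

lemma polyA_knot:
  fixes R \<beta> :: "real poly"
  assumes p: "p \<ge> 2" and dR: "degree R \<le> p" and bt: "poly \<beta> t \<noteq> 0"
    and hR: "\<forall>j\<le>p-1. poly ((pderiv ^^ j) R) t = 0"
    and hT: "\<forall>j\<le>p-1. poly ((pderiv ^^ j) (\<beta> * pderiv R)) t = 0"
  shows "R = 0"
proof -
  define D where "D = pderiv R"
  have "\<forall>j<p-1. poly ((pderiv ^^ j) D) t = 0"
  proof (intro allI impI)
    fix j assume "j < p-1" then have "Suc j \<le> p-1" by simp
    from hR[rule_format, OF this] show "poly ((pderiv ^^ j) D) t = 0" unfolding D_def pderiv_shift .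
  qed
  then obtain E where E: "D = [:-t,1:]^(p-1) * E" using polyDiv by (metis dvd_def)
  have "[:-t,1:]^p dvd \<beta> * D" using polyDiv[of p "\<beta> * D" t] hT unfolding D_def by auto
  moreover have "[:-t,1:]^p = [:-t,1:]^(p-1) * [:-t,1:]" using p
    by (metis One_nat_def Suc_diff_le diff_Suc_1 le_trans one_le_numeral power_Suc2)
  ultimately have "[:-t,1:]^(p-1) * [:-t,1:] dvd [:-t,1:]^(p-1) * (\<beta> * E)"
    using E by (simp add: ac_simps)
  then have "[:-t,1:] dvd \<beta> * E" by (subst (asm) dvd_mult_cancel_left) auto
  then have "poly (\<beta> * E) t = 0" using poly_eq_0_iff_dvd by blast
  then have Et: "poly E t = 0" using bt by simp
  have "D = 0"
  proof (rule ccontr)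
    assume "D \<noteq> 0"
    then have "E \<noteq> 0" using E by auto
    then have "degree D = (p-1) + degree E" using E by (simp add: degree_mult_eq degree_power_eq)
    moreover have "degree D \<le> p - 1" unfolding D_def using dR by (simp add: degree_pderiv)
    ultimately have "degree E = 0" by simp
    then have "E = 0" using Et deg0_zero by blast
    then show False using \<open>E \<noteq> 0\<close> by simp
  qed
  then have "degree R = 0" unfolding D_def using pderiv_eq_0_iff by blast
  then show ?thesis using hR deg0_zero by (metis funpow_0 zero_le)
qed

lemma poly_eq_on_Ioo:
  fixes P Q :: "real poly"
  assumes "a < b" "\<forall>x\<in>{a<..<b}. poly P x = poly Q x"
  shows "P = Q"
proof (rule ccontr)
  assume "P \<noteq> Q"
  then have "finite {x. poly (P - Q) x = 0}" using poly_roots_finite[of "P - Q"] by simp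
  moreover have "{a<..<b} \<subseteq> {x. poly (P - Q) x = 0}" using assms by auto
  ultimately show False using infinite_Ioo[OF assms(1)] finite_subset by blast
qed

lemma piece_sub:
  assumes "k < n" "x \<in> {a + real k / real n .. a + real (Suc k) / real n}"
  shows "x \<in> {a..a+1}"
proof -
  have n: "real n > 0" using assms by simp
  have "real k / real n \<ge> 0" by simp
  moreover have "real (Suc k) / real n \<le> 1" using assms n by (simp add: divide_le_eq)
  moreover have "a + real k / real n \<le> x" "x \<le> a + real (Suc k) / real n" using assms(2) by auto
  ultimately show ?thesis unfolding atLeastAtMost_iff by linarith
qed

lemma spline1_cong:
  assumes "spline1 q s n a f" "\<forall>x\<in>{a..a+1}. f x = g x"
  shows "spline1 q s n a g"
  using assms piece_sub unfolding spline1_def by metis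

lemma spline1_lincomb:
  assumes "finite I" "\<forall>i\<in>I. spline1 q s n a (f i)"
  shows "spline1 q s n a (\<lambda>x. \<Sum>i\<in>I. c i * f i x)"
proof -
  from assms(2) obtain PP where PP: "\<forall>i\<in>I.
        (\<forall>k<n. degree (PP i k) \<le> q \<and>
              (\<forall>x\<in>{a + real k / real n .. a + real (Suc k) / real n}. f i x = poly (PP i k) x)) \<and>
        (\<forall>k. 0 < k \<and> k < n \<longrightarrow>
              (\<forall>j\<le>s. poly ((pderiv ^^ j) (PP i (k - 1))) (a + real k / real n)
                     = poly ((pderiv ^^ j) (PP i k)) (a + real k / real n)))"
    unfolding spline1_def by metis
  define P where "P k = (\<Sum>i\<in>I. smult (c i) (PP i k))" for k
  show ?thesis unfolding spline1_def
  proof (intro exI[of _ P] conjI allI impI ballI)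
    fix k assume "k < n"
    show "degree (P k) \<le> q" unfolding P_def
      using PP \<open>k<n\<close> assms(1) by (intro degree_sum_le) (auto intro: order.trans[OF degree_smult_le])
    fix x assume "x \<in> {a + real k / real n .. a + real (Suc k) / real n}"
    then show "(\<Sum>i\<in>I. c i * f i x) = poly (P k) x" unfolding P_def poly_sum
      using PP \<open>k<n\<close> by (auto intro!: sum.cong)
  next
    fix k j assume "0 < k \<and> k < n" "j \<le> s"
    then show "poly ((pderiv ^^ j) (P (k - 1))) (a + real k / real n) =
           poly ((pderiv ^^ j) (P k)) (a + real k / real n)"
      unfolding P_def higher_pderiv_sum higher_pderiv_smult poly_sum poly_smult
      using PP by (auto intro!: sum.cong)
  qed
qed

lemma spline2_slice:
  assumes "spline2 q s n a \<Psi>" "u0 \<in> {a..a+1}"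
  shows "spline1 q s n 0 (\<lambda>v. \<Psi> (u0, v))"
proof -
  obtain m :: nat and f g :: "nat \<Rightarrow> real \<Rightarrow> real" where fg: "\<forall>i<m. spline1 q s n a (f i) \<and> spline1 q s n 0 (g i)"
    "\<forall>u\<in>{a..a+1}. \<forall>v\<in>{0..1}. \<Psi> (u, v) = (\<Sum>i<m. f i u * g i v)"
    using assms(1) unfolding spline2_def by blast
  have "spline1 q s n 0 (\<lambda>v. \<Sum>i\<in>{..<m}. f i u0 * g i v)"
    using fg(1) by (intro spline1_lincomb) auto
  then show ?thesis by (rule spline1_cong) (use fg(2) assms(2) in auto)
qed

lemma spline1_endpoint_deriv:
  assumes "spline1 q s n a f" "n \<ge> 1" "a = -1 \<or> a = 0"
  shows "\<exists>c. (f has_real_derivative c) (at 0 within {a..a+1})"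
proof -
  obtain P where P: "\<forall>k<n. (\<forall>x\<in>{a + real k / real n .. a + real (Suc k) / real n}. f x = poly (P k) x)"
    using assms(1) unfolding spline1_def by blast
  have n: "real n > 0" using assms(2) by simp
  define k where "k = (if a = 0 then 0 else n - 1)"
  have kn: "k < n" using assms(2) unfolding k_def by auto
  have sub: "x \<in> {a + real k / real n .. a + real (Suc k) / real n}"
    if "x \<in> {a..a+1}" "dist x 0 < 1 / real n" for x
  proof (cases "a = 0")
    case True
    then show ?thesis using that unfolding k_def by (auto simp: dist_real_def)
  next
    case False
    then have a: "a = -1" using assms(3) by simp
    have "real (n - 1) = real n - 1" using assms(2) by simp
    then have "a + real k / real n = - 1 / real n" "a + real (Suc k) / real n = 0"
      using a False n assms(2) unfolding k_def by (auto simp: field_simps)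
    then show ?thesis using that a by (auto simp: dist_real_def)
  qed
  have "((\<lambda>x. poly (P k) x) has_real_derivative poly (pderiv (P k)) 0) (at 0 within {a..a+1})"
    by (rule has_field_derivative_at_within) (rule poly_DERIV)
  then have "(f has_real_derivative poly (pderiv (P k)) 0) (at 0 within {a..a+1})"
    by (rule has_field_derivative_transform_within[where d="1/real n"])
       (use n assms(3) sub P kn in auto)
  then show ?thesis by blast
qed

lemma spline2_udiff:
  assumes "spline2 q s n a \<Psi>" "n \<ge> 1" "a = -1 \<or> a = 0"
  shows "\<exists>sd. spline1 q s n 0 sd \<and>
     (\<forall>v\<in>{0..1}. ((\<lambda>u. \<Psi> (u, v)) has_real_derivative sd v) (at 0 within {a..a+1}))"
proof -
  obtain m :: nat and f g :: "nat \<Rightarrow> real \<Rightarrow> real" where fg: "\<forall>i<m. spline1 q s n a (f i) \<and> spline1 q s n 0 (g i)"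
    "\<forall>u\<in>{a..a+1}. \<forall>v\<in>{0..1}. \<Psi> (u, v) = (\<Sum>i<m. f i u * g i v)"
    using assms(1) unfolding spline2_def by blast
  have "\<forall>i\<in>{..<m}. \<exists>c. (f i has_real_derivative c) (at 0 within {a..a+1})"
    using fg(1) spline1_endpoint_deriv assms(2,3) by blast
  then obtain c where c: "\<forall>i\<in>{..<m}. (f i has_real_derivative c i) (at 0 within {a..a+1})"
    by metis
  define sd where "sd v = (\<Sum>i\<in>{..<m}. c i * g i v)" for v
  have "spline1 q s n 0 sd" unfolding sd_def using fg(1) by (intro spline1_lincomb) auto
  moreover have "((\<lambda>u. \<Psi> (u, v)) has_real_derivative sd v) (at 0 within {a..a+1})"
    if v: "v \<in> {0..1}" for v
  proof -
    have "((\<lambda>u. \<Sum>i\<in>{..<m}. f i u * g i v) has_real_derivative sd v) (at 0 within {a..a+1})"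
      unfolding sd_def using c by (intro DERIV_sum DERIV_cmult_right) auto
    then show ?thesis
      by (rule has_field_derivative_transform_within[where d=1]) (use fg(2) v assms(3) in auto)
  qed
  ultimately show ?thesis by blast
qed

lemma deriv_Un:
  assumes "(f has_real_derivative D) (at x within S)" "(f has_real_derivative D) (at x within T)"
  shows "(f has_real_derivative D) (at x within (S \<union> T))"
  using assms unfolding has_field_derivative_def has_derivative_within
  by (auto simp: Lim_within_Un)

lemma piece_right:
  assumes "n \<ge> 1" "0 \<le> v" "v < 1"
  shows "\<exists>k<n. real k / real n \<le> v \<and> v < real (Suc k) / real n"
proof -
  have n: "real n > 0" using assms by simp
  define k where "k = nat \<lfloor>v * real n\<rfloor>"
  have f0: "\<lfloor>v * real n\<rfloor> \<ge> 0" using assms by simp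
  have kk: "real k = of_int \<lfloor>v * real n\<rfloor>" unfolding k_def using f0 by simp
  have a1: "real k \<le> v * real n" unfolding kk by linarith
  have a2: "v * real n < real k + 1" unfolding kk by linarith
  have a3: "v * real n < real n" using assms n by simp
  have "real k < real n" using a1 a3 by linarith
  then have "k < n" by simp
  moreover have "real k / real n \<le> v" using a1 n by (simp add: pos_divide_le_eq)
  moreover have "v < real (Suc k) / real n" using a2 n by (simp add: pos_less_divide_eq)
  ultimately show ?thesis by blast
qed

lemma piece_left:
  assumes "n \<ge> 1" "0 < v" "v \<le> 1"
  shows "\<exists>k<n. real k / real n < v \<and> v \<le> real (Suc k) / real n"
proof -
  have n: "real n > 0" using assms by simp
  define k where "k = nat (\<lceil>v * real n\<rceil> - 1)"
  have c1: "\<lceil>v * real n\<rceil> \<ge> 1" using assms n by (simp add: Suc_le_eq)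
  have kk: "real k = of_int \<lceil>v * real n\<rceil> - 1" unfolding k_def using c1 by simp
  have a1: "real k < v * real n" unfolding kk by linarith
  have a2: "v * real n \<le> real k + 1" unfolding kk by linarith
  have a3: "v * real n \<le> real n" using assms n by simp
  have "real k < real n" using a1 a3 by linarith
  then have "k < n" by simp
  moreover have "real k / real n < v" using a1 n by (simp add: pos_divide_less_eq)
  moreover have "v \<le> real (Suc k) / real n" using a2 n by (simp add: pos_le_divide_eq)
  ultimately show ?thesis by blast
qed

lemma poly_deriv_local:
  assumes "e > 0" "v \<in> S" "\<forall>y\<in>S. dist y v < e \<longrightarrow> f y = poly P y"
  shows "(f has_real_derivative poly (pderiv P) v) (at v within S)"
proof -
  have "((\<lambda>x. poly P x) has_real_derivative poly (pderiv P) v) (at v within S)"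
    by (rule has_field_derivative_at_within) (rule poly_DERIV)
  then show ?thesis
    by (rule has_field_derivative_transform_within[where d=e]) (use assms in auto)
qed

lemma spline1_diff:
  assumes sp: "spline1 q s n 0 f" and s: "s \<ge> 1" and n1: "n \<ge> 1" and v: "v \<in> {0..1}"
  shows "\<exists>D. (f has_real_derivative D) (at v within {0..1})"
proof -
  obtain P where P: "\<forall>k<n. (\<forall>x\<in>{0 + real k / real n .. 0 + real (Suc k) / real n}. f x = poly (P k) x)"
    "\<forall>k. 0 < k \<and> k < n \<longrightarrow>
              (\<forall>j\<le>s. poly ((pderiv ^^ j) (P (k - 1))) (0 + real k / real n)
                     = poly ((pderiv ^^ j) (P k)) (0 + real k / real n))"
    using sp unfolding spline1_def by blast
  have n: "real n > 0" using n1 by simp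
  have split: "{0..1} = {0..v} \<union> {v..(1::real)}" using v by auto
  have R: "(f has_real_derivative poly (pderiv (P k)) v) (at v within {v..1})"
    if k: "k < n" "real k / real n \<le> v" "v < real (Suc k) / real n" for k
  proof (rule poly_deriv_local[where e="real (Suc k) / real n - v"])
    show "\<forall>y\<in>{v..1}. dist y v < real (Suc k) / real n - v \<longrightarrow> f y = poly (P k) y"
    proof (intro ballI impI)
      fix y assume y: "y \<in> {v..1}" "dist y v < real (Suc k) / real n - v"
      then have "y \<in> {0 + real k / real n .. 0 + real (Suc k) / real n}"
        using k(2) unfolding dist_real_def atLeastAtMost_iff by linarith
      then show "f y = poly (P k) y" using P(1) k(1) by blast
    qed
  next
    show "0 < real (Suc k) / real n - v" using k(3) by linarith
  next
    show "v \<in> {v..1}" using v by simp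
  qed
  have L: "(f has_real_derivative poly (pderiv (P k)) v) (at v within {0..v})"
    if k: "k < n" "real k / real n < v" "v \<le> real (Suc k) / real n" for k
  proof (rule poly_deriv_local[where e="v - real k / real n"])
    show "\<forall>y\<in>{0..v}. dist y v < v - real k / real n \<longrightarrow> f y = poly (P k) y"
    proof (intro ballI impI)
      fix y assume y: "y \<in> {0..v}" "dist y v < v - real k / real n"
      then have "y \<in> {0 + real k / real n .. 0 + real (Suc k) / real n}"
        using k(3) unfolding dist_real_def atLeastAtMost_iff by linarith
      then show "f y = poly (P k) y" using P(1) k(1) by blast
    qed
  next
    show "0 < v - real k / real n" using k(2) by linarith
  next
    show "v \<in> {0..v}" using v by simp
  qed
  have single: "(f has_real_derivative D) (at x within {x})" for D x
    unfolding has_field_derivative_def has_derivative_within_singleton_iff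
    by (simp add: bounded_linear_mult_right)
  consider "v = 0" | "v = 1" | "0 < v \<and> v < 1" using v by (cases "v = 0"; cases "v = 1") auto
  then show ?thesis
  proof cases
    case 1
    obtain k where k: "k < n" "real k / real n \<le> v" "v < real (Suc k) / real n"
      using piece_right[OF n1, of v] 1 by auto
    have "(f has_real_derivative poly (pderiv (P k)) v) (at v within {v} \<union> {v..1})"
      by (rule deriv_Un[OF single R[OF k]])
    moreover have "{v} \<union> {v..1} = {0..(1::real)}" using 1 by auto
    ultimately show ?thesis by auto
  next
    case 2
    obtain k where k: "k < n" "real k / real n < v" "v \<le> real (Suc k) / real n"
      using piece_left[OF n1, of v] 2 by auto
    have "(f has_real_derivative poly (pderiv (P k)) v) (at v within {0..v} \<union> {v})"
      by (rule deriv_Un[OF L[OF k] single])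
    moreover have "{0..v} \<union> {v} = {0..(1::real)}" using 2 by auto
    ultimately show ?thesis by auto
  next
    case 3
    obtain k where k: "k < n" "real k / real n \<le> v" "v < real (Suc k) / real n"
      using piece_right[OF n1, of v] 3 by auto
    obtain k' where k': "k' < n" "real k' / real n < v" "v \<le> real (Suc k') / real n"
      using piece_left[OF n1, of v] 3 by auto
    have "real k' / real n < real (Suc k) / real n" using k(3) k'(2) by linarith
    then have "real k' < real (Suc k)" using n by (simp only: divide_less_cancel)
    moreover have "real k / real n \<le> real (Suc k') / real n" using k(2) k'(3) by linarith
    then have "real k \<le> real (Suc k')" using n by (simp only: divide_le_cancel)
    ultimately have "k' = k \<or> k = Suc k'" by linarith
    then have eq: "poly (pderiv (P k')) v = poly (pderiv (P k)) v"
    proof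
      assume kk: "k = Suc k'"
      then have "v = real k / real n" using k(2) k'(3) by simp
      moreover have "0 < k \<and> k < n" using kk k by simp
      moreover have "poly ((pderiv ^^ 1) (P (k - 1))) (0 + real k / real n) = poly ((pderiv ^^ 1) (P k)) (0 + real k / real n)"
        using P(2) s \<open>0 < k \<and> k < n\<close> by blast
      ultimately show ?thesis using kk by simp
    qed simp
    have "(f has_real_derivative poly (pderiv (P k)) v) (at v within {0..v} \<union> {v..1})"
      using deriv_Un[OF L[OF k', unfolded eq] R[OF k]] .
    then show ?thesis using split by (metis)
  qed
qed

lemma fun_sum_apply: "(\<Sum>i\<in>I. F i) x = (\<Sum>i\<in>I. (F i) (x::'a))"
  for F :: "'b \<Rightarrow> 'a \<Rightarrow> real"
  by (induction I rule: infinite_finite_induct) auto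

lemma poly_sum_upto:
  fixes A :: "real poly"
  assumes "degree A \<le> p"
  shows "poly A v = (\<Sum>j\<le>p. coeff A j * v ^ j)"
proof -
  have eq: "(\<Sum>j\<le>p. coeff A j * v ^ j) = (\<Sum>j\<le>degree A. coeff A j * v ^ j)"
    by (rule sum.mono_neutral_right) (use assms in \<open>auto simp: coeff_eq_0\<close>)
  show ?thesis by (rule trans[OF poly_altdef eq[symmetric]])
qed

lemma dimL:
  assumes V: "\<forall>g\<in>V. (\<forall>v. v \<notin> {0..1} \<longrightarrow> g v = 0) \<and>
     (\<exists>A B. degree A \<le> p \<and> degree B \<le> p \<and> (\<forall>v\<in>{0..1}. g v = (if v \<le> c then poly A v else poly B v)))"
  shows "dim_atmost V (2*p+2)"
proof -
  interpret VS: vector_space "\<lambda>(r::real) (f::real\<Rightarrow>real) x. r * f x"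
    by unfold_locales (auto simp: fun_eq_iff algebra_simps)
  define e where "e j = (\<lambda>v::real. if v \<in> {0..1} \<and> v \<le> c then v ^ j else 0)" for j :: nat
  define f where "f j = (\<lambda>v::real. if v \<in> {0..1} \<and> \<not> v \<le> c then v ^ j else 0)" for j :: nat
  define T where "T = e ` {..p} \<union> f ` {..p}"
  have fT: "finite T" unfolding T_def by simp
  have cT: "card T \<le> 2*p+2"
  proof -
    have "card T \<le> card (e ` {..p}) + card (f ` {..p})" unfolding T_def by (rule card_Un_le)
    also have "\<dots> \<le> card {..p} + card {..p}" by (intro add_mono card_image_le) auto
    finally show ?thesis by simp
  qed
  have span: "g \<in> VS.span T" if "g \<in> V" for g
  proof -
    obtain A B where AB: "degree A \<le> p" "degree B \<le> p"
      "\<forall>v\<in>{0..1}. g v = (if v \<le> c then poly A v else poly B v)"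
      using V \<open>g \<in> V\<close> by blast
    have out: "\<forall>v. v \<notin> {0..1} \<longrightarrow> g v = 0" using V \<open>g \<in> V\<close> by blast
    define h where "h = (\<Sum>j\<le>p. (\<lambda>x. coeff A j * e j x)) + (\<Sum>j\<le>p. (\<lambda>x. coeff B j * f j x))"
    have "g = h"
    proof
      fix v
      show "g v = h v"
        unfolding h_def plus_fun_apply fun_sum_apply e_def f_def
        using out AB poly_sum_upto[OF AB(1), of v] poly_sum_upto[OF AB(2), of v]
        by (cases "v \<in> {0..1}"; cases "v \<le> c") auto
    qed
    moreover have "h \<in> VS.span T" unfolding h_def
      by (intro VS.span_add VS.span_sum VS.span_scale VS.span_base) (auto simp: T_def)
    ultimately show ?thesis by simp
  qed
  show ?thesis unfolding dim_atmost_def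
  proof (intro allI impI)
    fix Bs assume Bs: "Bs \<subseteq> V \<and> finite Bs \<and> lin_indep Bs"
    have ind: "VS.independent Bs"
      unfolding VS.independent_explicit_finite_subsets
    proof (intro allI impI ballI)
      fix S u v assume S: "S \<subseteq> Bs" "finite S" and su: "(\<Sum>v\<in>S. (\<lambda>x. u v * v x)) = 0" and v: "v \<in> S"
      define cf where "cf b = (if b \<in> S then u b else 0)" for b
      have "\<forall>x. (\<Sum>b\<in>Bs. cf b * b x) = 0"
      proof
        fix x
        have "(\<Sum>b\<in>Bs. cf b * b x) = (\<Sum>b\<in>S. u b * b x)"
          by (rule sum.mono_neutral_cong_right) (use S Bs in \<open>auto simp: cf_def\<close>)
        also have "\<dots> = (\<Sum>v\<in>S. (\<lambda>x. u v * v x)) x" by (simp add: fun_sum_apply)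
        also have "\<dots> = 0" using su by simp
        finally show "(\<Sum>b\<in>Bs. cf b * b x) = 0" .
      qed
      then have "cf v = 0" using Bs S v unfolding lin_indep_def by blast
      then show "u v = 0" using v by (simp add: cf_def)
    qed
    have "Bs \<subseteq> VS.span T" using span Bs by blast
    then have "card Bs \<le> card T" using VS.independent_span_bound[OF fT ind] by blast
    then show "card Bs \<le> 2*p+2" using cT by simp
  qed
qed

lemma spline1_0:
  assumes "spline1 q s n 0 f"
  shows "\<exists>P. (\<forall>k<n. degree (P k) \<le> q \<and> (\<forall>x\<in>{real k / real n .. real (Suc k) / real n}. f x = poly (P k) x)) \<and>
     (\<forall>k. 0 < k \<and> k < n \<longrightarrow> (\<forall>j\<le>s. poly ((pderiv ^^ j) (P (k - 1))) (real k / real n)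
                     = poly ((pderiv ^^ j) (P k)) (real k / real n)))"
  using assms unfolding spline1_def by simp

lemma piece_any:
  assumes "n \<ge> 1" "v \<in> {0..1}"
  shows "\<exists>k<n. v \<in> {real k / real n .. real (Suc k) / real n}"
proof (cases "v < 1")
  case True
  then show ?thesis using piece_right[OF assms(1), of v] assms(2) by fastforce
next
  case False
  then have "0 < v" "v \<le> 1" using assms(2) by auto
  then show ?thesis using piece_left[OF assms(1), of v] by fastforce
qed

lemma piece_in01:
  assumes "k < n" "x \<in> {real k / real n .. real (Suc k) / real n}"
  shows "x \<in> {0..1}"
  using piece_sub[of k n x 0] assms by simp

lemma open_piece_deriv:
  assumes "k < n" "x \<in> {real k / real n <..< real (Suc k) / real n}"
    and "\<forall>y\<in>{real k / real n .. real (Suc k) / real n}. g y = poly P y"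
  shows "(g has_real_derivative poly (pderiv P) x) (at x within {0..1})"
proof (rule poly_deriv_local[where e="min (x - real k / real n) (real (Suc k) / real n - x)"])
  show "0 < min (x - real k / real n) (real (Suc k) / real n - x)" using assms(2) by simp
  show "x \<in> {0..1}" using piece_in01[OF assms(1), of x] assms(2) by simp
  show "\<forall>y\<in>{0..1}. dist y x < min (x - real k / real n) (real (Suc k) / real n - x) \<longrightarrow> g y = poly P y"
  proof (intro ballI impI)
    fix y assume "y \<in> {0..(1::real)}" "dist y x < min (x - real k / real n) (real (Suc k) / real n - x)"
    then have "y \<in> {real k / real n .. real (Suc k) / real n}"
      unfolding dist_real_def atLeastAtMost_iff by (simp add: abs_less_iff)
    then show "g y = poly P y" using assms(3) by blast
  qed
qed

lemma Ioo_piece_ne: "k < n \<Longrightarrow> real k / real n < real (Suc k) / real n"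
  by (simp add: divide_strict_right_mono)

lemma poly_lin:
  fixes P :: "real poly"
  assumes "degree P \<le> 1"
  shows "poly P x = coeff P 0 + coeff P 1 * x"
proof -
  have "poly P x = (\<Sum>j\<le>1. coeff P j * x ^ j)" using poly_sum_upto assms by blast
  then show ?thesis by simp
qed

lemma lin_root_unique:
  fixes \<beta> :: "real poly"
  assumes "degree \<beta> \<le> 1" "\<beta> \<noteq> 0" "poly \<beta> x = 0" "poly \<beta> y = 0"
  shows "x = y"
proof (rule ccontr)
  assume "x \<noteq> y"
  have "poly \<beta> x - poly \<beta> y = coeff \<beta> 1 * (x - y)" by (simp add: poly_lin[OF assms(1)] algebra_simps)
  then have "coeff \<beta> 1 * (x - y) = 0" using assms(3,4) by simp
  then have c1: "coeff \<beta> 1 = 0" using \<open>x \<noteq> y\<close> by simp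
  then have c0: "coeff \<beta> 0 = 0" using assms(3) poly_lin[OF assms(1)] by simp
  have "\<forall>i. coeff \<beta> i = 0"
  proof
    fix i show "coeff \<beta> i = 0"
      using c0 c1 assms(1) by (cases "i \<le> 1") (auto simp: coeff_eq_0 le_Suc_eq)
  qed
  then have "\<beta> = 0" by (simp add: poly_eq_iff)
  then show False using assms(2) by simp
qed

lemma nat_div_less: "real n > 0 \<Longrightarrow> real a / real n < real b / real n \<Longrightarrow> a < b"
  by (simp add: divide_less_cancel)

definition KK :: "nat \<Rightarrow> real poly \<Rightarrow> nat" where
  "KK n \<beta> = (if \<exists>k. 0 < k \<and> k < n \<and> poly \<beta> (real k / real n) = 0
              then (SOME k. 0 < k \<and> k < n \<and> poly \<beta> (real k / real n) = 0) else 0)"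

definition cc :: "nat \<Rightarrow> real poly \<Rightarrow> real" where
  "cc n \<beta> = real (KK n \<beta>) / real n"

lemma lemA:
  assumes n1: "n \<ge> 1" and p: "p \<ge> 2" and b0: "\<beta> \<noteq> 0" and db: "degree \<beta> \<le> 1"
    and sg: "spline1 p (p-1) n 0 g" and ss: "spline1 p (p-1) n 0 s"
    and H: "\<forall>v\<in>{0..1}. \<forall>D. (g has_real_derivative D) (at v within {0..1}) \<longrightarrow> s v = poly \<beta> v * D"
  shows "\<exists>A B. degree A \<le> p \<and> degree B \<le> p \<and>
           (\<forall>v\<in>{0..1}. g v = (if v \<le> cc n \<beta> then poly A v else poly B v))"
proof -
  obtain Q where Q: "\<forall>k<n. degree (Q k) \<le> p \<and> (\<forall>x\<in>{real k / real n .. real (Suc k) / real n}. g x = poly (Q k) x)"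
     "\<forall>k. 0 < k \<and> k < n \<longrightarrow> (\<forall>j\<le>p-1. poly ((pderiv ^^ j) (Q (k - 1))) (real k / real n)
                     = poly ((pderiv ^^ j) (Q k)) (real k / real n))"
    using spline1_0[OF sg] by blast
  obtain S where S: "\<forall>k<n. degree (S k) \<le> p \<and> (\<forall>x\<in>{real k / real n .. real (Suc k) / real n}. s x = poly (S k) x)"
     "\<forall>k. 0 < k \<and> k < n \<longrightarrow> (\<forall>j\<le>p-1. poly ((pderiv ^^ j) (S (k - 1))) (real k / real n)
                     = poly ((pderiv ^^ j) (S k)) (real k / real n))"
    using spline1_0[OF ss] by blast
  have SQ: "S k = \<beta> * pderiv (Q k)" if k: "k < n" for k
  proof (rule poly_eq_on_Ioo[OF Ioo_piece_ne[OF k]], intro ballI)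
    fix x assume x: "x \<in> {real k / real n <..< real (Suc k) / real n}"
    have xc: "x \<in> {real k / real n .. real (Suc k) / real n}" using x by simp
    have "(g has_real_derivative poly (pderiv (Q k)) x) (at x within {0..1})"
      by (rule open_piece_deriv[OF k x]) (use Q(1) k in blast)
    then have "s x = poly \<beta> x * poly (pderiv (Q k)) x" using H piece_in01[OF k xc] by blast
    then show "poly (S k) x = poly (\<beta> * pderiv (Q k)) x" using S(1) k xc by simp
  qed
  have knot: "Q (k - 1) = Q k" if k: "0 < k" "k < n" and bt: "poly \<beta> (real k / real n) \<noteq> 0" for k
  proof -
    define R where "R = Q (k - 1) - Q k"
    have k1: "k - 1 < n" using k by simp
    have "\<beta> * pderiv R = S (k - 1) - S k" unfolding R_def
      using SQ[OF k1] SQ[OF k(2)] by (simp add: pderiv_diff right_diff_distrib)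
    then show ?thesis
      using polyA_knot[OF p _ bt, of R] Q S k k1
      unfolding R_def by (simp add: higher_pderiv_diff degree_diff_le)
  qed
  define K0 where "K0 = KK n \<beta>"
  have K0n: "K0 < n" unfolding K0_def KK_def using n1
    by (auto intro: someI2_ex[where Q="\<lambda>k. k < n"])
  have knot2: "Q (k - 1) = Q k" if k: "0 < k" "k < n" "k \<noteq> K0" for k
  proof (cases "poly \<beta> (real k / real n) = 0")
    case False then show ?thesis using knot k by blast
  next
    case True
    then have ex: "\<exists>k. 0 < k \<and> k < n \<and> poly \<beta> (real k / real n) = 0" using k by blast
    have "0 < K0 \<and> K0 < n \<and> poly \<beta> (real K0 / real n) = 0"
      unfolding K0_def KK_def if_P[OF ex] by (rule someI_ex[OF ex])
    then have "real k / real n = real K0 / real n" using lin_root_unique[OF db b0 True] by blast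
    then have "k = K0" using n1 by simp
    then show ?thesis using k by simp
  qed
  have low: "k < K0 \<longrightarrow> Q k = Q 0" for k
  proof (induction k)
    case (Suc k)
    then show ?case using knot2[of "Suc k"] K0n by auto
  qed simp
  have high: "K0 \<le> k \<longrightarrow> k < n \<longrightarrow> Q k = Q K0" for k
  proof (induction k)
    case 0 then show ?case by simp
  next
    case (Suc k)
    then show ?case using knot2[of "Suc k"] by (auto simp: le_Suc_eq)
  qed
  have n: "real n > 0" using n1 by simp
  have gk: "g v = poly (Q k) v" if "k < n" "v \<in> {real k / real n .. real (Suc k) / real n}" for k v
    using Q(1) that by blast
  have cc0: "cc n \<beta> \<ge> 0" unfolding cc_def by simp
  show ?thesis
  proof (intro exI conjI ballI)
    show "degree (Q 0) \<le> p" using Q(1) n1 by simp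
    show "degree (Q K0) \<le> p" using Q(1) K0n by simp
    fix v :: real assume v: "v \<in> {0..1}"
    show "g v = (if v \<le> cc n \<beta> then poly (Q 0) v else poly (Q K0) v)"
    proof (cases "v \<le> cc n \<beta>")
      case True
      have "g v = poly (Q 0) v"
      proof (cases "v = 0")
        case True
        have "v \<in> {real 0 / real n .. real (Suc 0) / real n}" using True n by simp
        then show ?thesis using gk[of 0 v] n1 by simp
      next
        case False
        then obtain k where k: "k < n" "real k / real n < v" "v \<le> real (Suc k) / real n"
          using piece_left[OF n1, of v] v by auto
        have "real k / real n < real K0 / real n" using k(2) True unfolding cc_def K0_def by linarith
        then have "k < K0" using nat_div_less[OF n] by blast
        then have "Q k = Q 0" using low by blast
        moreover have "g v = poly (Q k) v" using gk[OF k(1)] k(2,3) by simp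
        ultimately show ?thesis by simp
      qed
      then show ?thesis using True by simp
    next
      case False
      then have "cc n \<beta> < v" by simp
      then have v0: "0 < v" using cc0 by linarith
      have v1: "v \<le> 1" using v by simp
      obtain k where k: "k < n" "real k / real n < v" "v \<le> real (Suc k) / real n"
        using piece_left[OF n1 v0 v1] by blast
      have "real K0 / real n < real (Suc k) / real n"
        using k(3) \<open>cc n \<beta> < v\<close> unfolding cc_def K0_def by linarith
      then have "K0 < Suc k" using nat_div_less[OF n] by blast
      then have "Q k = Q K0" using high[of k] k(1) by simp
      moreover have "g v = poly (Q k) v" using gk[OF k(1)] k(2,3) by simp
      ultimately show ?thesis using False by simp
    qed
  qed
qed

lemma coeff_hi: "degree (P::real poly) \<le> 1 \<Longrightarrow> 2 \<le> i \<Longrightarrow> coeff P i = 0"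
  by (simp add: coeff_eq_0)

lemma lin2:
  fixes aL aR :: "real poly"
  assumes dL: "degree aL \<le> 1" and dR: "degree aR \<le> 1"
    and ind: "\<forall>c1 c2. smult c1 aL + smult c2 aR = 0 \<longrightarrow> c1 = 0 \<and> c2 = 0"
  shows "\<exists>a b c d. \<forall>x. a * poly aL x + b * poly aR x = 1 \<and> c * poly aL x + d * poly aR x = x"
proof -
  define l0 l1 r0 r1 where lr: "l0 = coeff aL 0" "l1 = coeff aL 1" "r0 = coeff aR 0" "r1 = coeff aR 1"
  define \<Delta> where "\<Delta> = l0 * r1 - l1 * r0"
  have zero: "smult c1 aL + smult c2 aR = 0"
    if "c1 * l0 + c2 * r0 = 0" "c1 * l1 + c2 * r1 = 0" for c1 c2
  proof -
    have "coeff (smult c1 aL + smult c2 aR) i = 0" for i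
    proof -
      consider "i = 0" | "i = 1" | "2 \<le> i" by linarith
      then show ?thesis
      proof cases
        case 1 then show ?thesis using that(1) by (simp add: lr)
      next
        case 2 then show ?thesis using that(2) by (simp add: lr)
      next
        case 3 then show ?thesis using coeff_hi[OF dL 3] coeff_hi[OF dR 3] by simp
      qed
    qed
    then show ?thesis by (simp add: poly_eq_iff)
  qed
  have "\<Delta> \<noteq> 0"
  proof
    assume D: "\<Delta> = 0"
    show False
    proof (cases "r1 = 0 \<and> l1 = 0")
      case False
      have "smult r1 aL + smult (- l1) aR = 0"
        by (rule zero) (use D in \<open>auto simp: \<Delta>_def algebra_simps\<close>)
      from ind[rule_format, OF this] show False using False by simp
    next
      case True
      have "smult r0 aL + smult (- l0) aR = 0"
        by (rule zero) (use True in \<open>auto simp: algebra_simps\<close>)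
      from ind[rule_format, OF this] have "r0 = 0 \<and> l0 = 0" by simp
      then have "smult 1 aL + smult 0 aR = 0" using True by (intro zero) auto
      from ind[rule_format, OF this] show False by simp
    qed
  qed
  have pL: "poly aL x = l0 + l1 * x" for x using poly_lin[OF dL] by (simp add: lr)
  have pR: "poly aR x = r0 + r1 * x" for x using poly_lin[OF dR] by (simp add: lr)
  show ?thesis
  proof (intro exI allI conjI)
    fix x
    have e1: "r1 * poly aL x - l1 * poly aR x = \<Delta>" unfolding pL pR \<Delta>_def by (simp add: algebra_simps)
    have e2: "l0 * poly aR x - r0 * poly aL x = \<Delta> * x" unfolding pL pR \<Delta>_def by (simp add: algebra_simps)
    have "r1 / \<Delta> * poly aL x + (- l1 / \<Delta>) * poly aR x = (r1 * poly aL x - l1 * poly aR x) / \<Delta>"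
      by (simp add: diff_divide_distrib)
    then show "r1 / \<Delta> * poly aL x + (- l1 / \<Delta>) * poly aR x = 1" using e1 \<open>\<Delta> \<noteq> 0\<close> by simp
    have "(- r0 / \<Delta>) * poly aL x + l0 / \<Delta> * poly aR x = (l0 * poly aR x - r0 * poly aL x) / \<Delta>"
      by (simp add: diff_divide_distrib)
    then show "(- r0 / \<Delta>) * poly aL x + l0 / \<Delta> * poly aR x = x" using e2 \<open>\<Delta> \<noteq> 0\<close> by simp
  qed
qed

lemma lemB:
  assumes n1: "n \<ge> 1" and p: "p \<ge> 2" and dL: "degree aL \<le> 1" and dR: "degree aR \<le> 1"
    and ind: "\<forall>c1 c2. smult c1 aL + smult c2 aR = 0 \<longrightarrow> c1 = 0 \<and> c2 = 0"
    and sL: "spline1 p (p-1) n 0 fL" and sR: "spline1 p (p-1) n 0 fR"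
    and H: "\<forall>v\<in>{0..1}. fL v = poly aL v * g v \<and> fR v = poly aR v * g v"
  shows "\<exists>A. degree A \<le> p \<and> (\<forall>v\<in>{0..1}. g v = poly A v)"
proof -
  obtain a b c d where abcd: "\<forall>x. a * poly aL x + b * poly aR x = 1 \<and> c * poly aL x + d * poly aR x = x"
    using lin2[OF dL dR ind] by blast
  obtain PL where PL: "\<forall>k<n. degree (PL k) \<le> p \<and> (\<forall>x\<in>{real k / real n .. real (Suc k) / real n}. fL x = poly (PL k) x)"
     "\<forall>k. 0 < k \<and> k < n \<longrightarrow> (\<forall>j\<le>p-1. poly ((pderiv ^^ j) (PL (k - 1))) (real k / real n)
                     = poly ((pderiv ^^ j) (PL k)) (real k / real n))"
    using spline1_0[OF sL] by blast
  obtain PR where PR: "\<forall>k<n. degree (PR k) \<le> p \<and> (\<forall>x\<in>{real k / real n .. real (Suc k) / real n}. fR x = poly (PR k) x)"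
     "\<forall>k. 0 < k \<and> k < n \<longrightarrow> (\<forall>j\<le>p-1. poly ((pderiv ^^ j) (PR (k - 1))) (real k / real n)
                     = poly ((pderiv ^^ j) (PR k)) (real k / real n))"
    using spline1_0[OF sR] by blast
  define Q where "Q k = smult a (PL k) + smult b (PR k)" for k
  define Q' where "Q' k = smult c (PL k) + smult d (PR k)" for k
  have gQ: "g x = poly (Q k) x" and gQ': "x * g x = poly (Q' k) x"
    if k: "k < n" and x: "x \<in> {real k / real n .. real (Suc k) / real n}" for k x
  proof -
    have x01: "x \<in> {0..1}" using piece_in01[OF k x] .
    have e1: "fL x = poly (PL k) x" "fR x = poly (PR k) x" using PL(1) PR(1) k x by blast+
    have e2: "fL x = poly aL x * g x" "fR x = poly aR x * g x" using H x01 by blast+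
    have "g x = (a * poly aL x + b * poly aR x) * g x" using abcd by simp
    also have "\<dots> = a * fL x + b * fR x" using e2 by (simp add: algebra_simps)
    finally show "g x = poly (Q k) x" unfolding Q_def using e1 by simp
    have "x * g x = (c * poly aL x + d * poly aR x) * g x" using abcd by simp
    also have "\<dots> = c * fL x + d * fR x" using e2 by (simp add: algebra_simps)
    finally show "x * g x = poly (Q' k) x" unfolding Q'_def using e1 by simp
  qed
  have degQ: "degree (Q k) \<le> p - 1" if k: "k < n" for k
  proof -
    have "Q' k = [:0,1:] * Q k"
    proof (rule poly_eq_on_Ioo[OF Ioo_piece_ne[OF k]], intro ballI)
      fix x assume "x \<in> {real k / real n <..< real (Suc k) / real n}"
      then have x: "x \<in> {real k / real n .. real (Suc k) / real n}" by simp
      show "poly (Q' k) x = poly ([:0, 1:] * Q k) x" using gQ[OF k x] gQ'[OF k x] by simp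
    qed
    moreover have "degree (Q' k) \<le> p" unfolding Q'_def using PL(1) PR(1) k
      by (intro degree_add_le order.trans[OF degree_smult_le]) auto
    ultimately have "degree ([:0,1:] * Q k) \<le> p" by simp
    then show ?thesis by (cases "Q k = 0") (auto simp: degree_mult_eq)
  qed
  have knot: "Q (k - 1) = Q k" if k: "0 < k" "k < n" for k
  proof -
    have k1: "k - 1 < n" using k by simp
    have "Q (k - 1) - Q k = 0"
    proof (rule polyZ[where m="p-1" and t="real k / real n"])
      show "degree (Q (k - 1) - Q k) \<le> p - 1"
        using degQ[OF k1] degQ[OF k(2)] by (intro degree_diff_le) auto
      show "\<forall>j\<le>p - 1. poly ((pderiv ^^ j) (Q (k - 1) - Q k)) (real k / real n) = 0"
        using PL(2) PR(2) k unfolding Q_def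
        by (simp add: higher_pderiv_diff higher_pderiv_add higher_pderiv_smult)
    qed
    then show ?thesis by simp
  qed
  have all: "k < n \<longrightarrow> Q k = Q 0" for k
    by (induction k) (use knot in force)+
  show ?thesis
  proof (intro exI conjI ballI)
    show "degree (Q 0) \<le> p" using degQ n1 by fastforce
    fix v :: real assume v: "v \<in> {0..1}"
    obtain k where k: "k < n" "v \<in> {real k / real n .. real (Suc k) / real n}"
      using piece_any[OF n1 v] by blast
    have "Q k = Q 0" using all[of k] k(1) by simp
    then show "g v = poly (Q 0) v" using gQ[OF k] by simp
  qed
qed

lemma deriv_unique01:
  assumes "(f has_real_derivative D1) (at v within {0..1})" "(f has_real_derivative D2) (at v within {0..1})"
    "v \<in> {0..(1::real)}"
  shows "D1 = D2"
  using vector_derivative_within_closed_interval[of 0 1 v f D1] vector_derivative_within_closed_interval[of 0 1 v f D2]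
    assms by (simp add: has_real_derivative_iff_has_vector_derivative)

lemma side:
  assumes n1: "n \<ge> 1" and a: "a = -1 \<or> a = 0"
    and F1: "spline2 p (p-1) n a (\<lambda>x. fst (F x))" and F2: "spline2 p (p-1) n a (\<lambda>x. snd (F x))"
    and Ph: "spline2 p (p-1) n a (\<phi> \<circ> F)"
    and C1: "C1_grad Om \<phi> G" and sub: "F ` rect a \<subseteq> Om"
  shows "\<exists>sd. spline1 p (p-1) n 0 sd \<and> (\<forall>v\<in>{0..1}. sd v = G (F (0,v)) \<bullet> Du a F (0,v))"
proof -
  obtain sd where sd: "spline1 p (p-1) n 0 sd"
    "\<forall>v\<in>{0..1}. ((\<lambda>u. (\<phi> \<circ> F) (u, v)) has_real_derivative sd v) (at 0 within {a..a+1})"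
    using spline2_udiff[OF Ph n1 a] by blast
  obtain s1 where s1: "\<forall>v\<in>{0..1}. ((\<lambda>u. fst (F (u, v))) has_real_derivative s1 v) (at 0 within {a..a+1})"
    using spline2_udiff[OF F1 n1 a] by blast
  obtain s2 where s2: "\<forall>v\<in>{0..1}. ((\<lambda>u. snd (F (u, v))) has_real_derivative s2 v) (at 0 within {a..a+1})"
    using spline2_udiff[OF F2 n1 a] by blast
  have a0: "0 \<in> {a..a+1}" "a < a + 1" using a by auto
  have "sd v = G (F (0,v)) \<bullet> Du a F (0,v)" if v: "v \<in> {0..1}" for v
  proof -
    have d1: "((\<lambda>u. fst (F (u, v))) has_vector_derivative s1 v) (at 0 within {a..a+1})"
      using s1 v by (simp add: has_real_derivative_iff_has_vector_derivative)
    have d2: "((\<lambda>u. snd (F (u, v))) has_vector_derivative s2 v) (at 0 within {a..a+1})"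
      using s2 v by (simp add: has_real_derivative_iff_has_vector_derivative)
    have dF: "((\<lambda>u. F (u, v)) has_vector_derivative (s1 v, s2 v)) (at 0 within {a..a+1})"
      using has_vector_derivative_Pair[OF d1 d2] by simp
    have Du: "Du a F (0,v) = (s1 v, s2 v)"
      unfolding Du_def using vector_derivative_within_closed_interval[OF a0(2) a0(1) dF] by simp
    have inr: "(u, v) \<in> rect a" if "u \<in> {a..a+1}" for u using that v unfolding rect_def by auto
    have "(\<phi> has_derivative (\<lambda>y. G (F (0,v)) \<bullet> y)) (at (F (0,v)) within Om)"
      using C1 sub inr[OF a0(1)] unfolding C1_grad_def by blast
    then have "(\<phi> has_derivative (\<lambda>y. G (F (0,v)) \<bullet> y)) (at ((\<lambda>u. F (u, v)) 0) within (\<lambda>u. F (u, v)) ` {a..a+1})"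
      by (rule has_derivative_subset) (use sub inr in auto)
    from vector_derivative_diff_chain_within[OF dF this]
    have c1: "((\<lambda>u. (\<phi> \<circ> F) (u, v)) has_vector_derivative G (F (0,v)) \<bullet> (s1 v, s2 v)) (at 0 within {a..a+1})"
      by (simp add: comp_def)
    have c2: "((\<lambda>u. (\<phi> \<circ> F) (u, v)) has_vector_derivative sd v) (at 0 within {a..a+1})"
      using sd(2) v by (simp add: has_real_derivative_iff_has_vector_derivative)
    show ?thesis
      using vector_derivative_within_closed_interval[OF a0(2) a0(1) c1]
        vector_derivative_within_closed_interval[OF a0(2) a0(1) c2] Du by simp
  qed
  then show ?thesis using sd(1) by blast
qed

lemma vder:
  assumes n1: "n \<ge> 1" and p2: "p \<ge> 2"
    and F1: "spline2 p (p-1) n (-1) (\<lambda>x. fst (F x))" and F2: "spline2 p (p-1) n (-1) (\<lambda>x. snd (F x))"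
    and C1: "C1_grad Om \<phi> G" and sub: "F ` rect (-1) \<subseteq> Om" and v: "v \<in> {0..1}"
  shows "((\<lambda>v. \<phi> (F0 F v)) has_vector_derivative (G (F0 F v) \<bullet> DF0 F v)) (at v within {0..1})"
proof -
  have z: "(0::real) \<in> {-1..-1+1}" by simp
  have sp1: "spline1 p (p-1) n 0 (\<lambda>v. fst (F (0, v)))" using spline2_slice[OF F1 z] by simp
  have sp2: "spline1 p (p-1) n 0 (\<lambda>v. snd (F (0, v)))" using spline2_slice[OF F2 z] by simp
  have s1: "p - 1 \<ge> 1" using p2 by simp
  obtain D1 where D1: "((\<lambda>v. fst (F (0, v))) has_real_derivative D1) (at v within {0..1})"
    using spline1_diff[OF sp1 s1 n1 v] by blast
  obtain D2 where D2: "((\<lambda>v. snd (F (0, v))) has_real_derivative D2) (at v within {0..1})"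
    using spline1_diff[OF sp2 s1 n1 v] by blast
  have dF: "(F0 F has_vector_derivative (D1, D2)) (at v within {0..1})"
    using has_vector_derivative_Pair[OF D1[unfolded has_real_derivative_iff_has_vector_derivative]
        D2[unfolded has_real_derivative_iff_has_vector_derivative]]
    by (simp add: F0_def[abs_def])
  have DF: "DF0 F v = (D1, D2)"
    unfolding DF0_def using vector_derivative_within_closed_interval[of 0 1 v, OF _ v dF] by simp
  have inr: "(0, w) \<in> rect (-1)" if "w \<in> {0..1}" for w using that unfolding rect_def by auto
  have "(\<phi> has_derivative (\<lambda>y. G (F0 F v) \<bullet> y)) (at (F0 F v) within Om)"
    using C1 sub inr[OF v] unfolding C1_grad_def F0_def by blast
  then have "(\<phi> has_derivative (\<lambda>y. G (F0 F v) \<bullet> y)) (at (F0 F v) within F0 F ` {0..1})"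
    by (rule has_derivative_subset) (use sub inr in \<open>auto simp: F0_def\<close>)
  from vector_derivative_diff_chain_within[OF dF this]
  show ?thesis using DF by (simp add: comp_def)
qed

lemma trace_facts:
  assumes n1: "n \<ge> 1" and p2: "p \<ge> 2"
    and pL: "patch p n (-1) FL" and pR: "patch p n 0 FR"
    and eqLR: "\<forall>v\<in>{0..1}. FL (0, v) = FR (0, v)"
    and AS: "AS_G1 FL FR aL aR bL bR"
    and tr: "(g0, g1) \<in> trace_space p n FL FR aL bL"
  shows "\<exists>sL sR w. spline1 p (p-1) n 0 g0 \<and> spline1 p (p-1) n 0 sL \<and> spline1 p (p-1) n 0 sR \<and>
     (\<forall>v\<in>{0..1}. (g0 has_real_derivative w v) (at v within {0..1}) \<and>
        sL v = poly aL v * g1 v + poly bL v * w v \<and> sR v = poly aR v * g1 v + poly bR v * w v)"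
proof -
  obtain \<phi> G where V: "Vsp p n FL FR \<phi>" and C1: "C1_grad (Omega FL FR) \<phi> G"
    and g0: "\<forall>v. g0 v = (if v \<in> {0..1} then \<phi> (F0 FL v) else 0)"
    and g1: "\<forall>v. g1 v = (if v \<in> {0..1} then G (F0 FL v) \<bullet> dvec FL aL bL v else 0)"
    using tr unfolding trace_space_def by blast
  define Om where "Om = Omega FL FR"
  have subL: "FL ` rect (-1) \<subseteq> Om" and subR: "FR ` rect 0 \<subseteq> Om" unfolding Om_def Omega_def by auto
  have C1': "C1_grad Om \<phi> G" using C1 unfolding Om_def .
  have FL1: "spline2 p (p-1) n (-1) (\<lambda>x. fst (FL x))" "spline2 p (p-1) n (-1) (\<lambda>x. snd (FL x))"
    using pL unfolding patch_def by auto
  have FR1: "spline2 p (p-1) n 0 (\<lambda>x. fst (FR x))" "spline2 p (p-1) n 0 (\<lambda>x. snd (FR x))"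
    using pR unfolding patch_def by auto
  have PhL: "spline2 p (p-1) n (-1) (\<phi> \<circ> FL)" and PhR: "spline2 p (p-1) n 0 (\<phi> \<circ> FR)"
    using V unfolding Vsp_def by auto
  obtain sL where sL: "spline1 p (p-1) n 0 sL" "\<forall>v\<in>{0..1}. sL v = G (FL (0,v)) \<bullet> Du (-1) FL (0,v)"
    using side[OF n1 _ FL1 PhL C1' subL] by auto
  obtain sR where sR: "spline1 p (p-1) n 0 sR" "\<forall>v\<in>{0..1}. sR v = G (FR (0,v)) \<bullet> Du 0 FR (0,v)"
    using side[OF n1 _ FR1 PhR C1' subR] by auto
  have z: "(0::real) \<in> {-1..-1+1}" by simp
  have "spline1 p (p-1) n 0 (\<lambda>v. (\<phi> \<circ> FL) (0, v))" using spline2_slice[OF PhL z] .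
  then have sg: "spline1 p (p-1) n 0 g0" by (rule spline1_cong) (use g0 in \<open>auto simp: F0_def\<close>)
  define w where "w v = G (F0 FL v) \<bullet> DF0 FL v" for v
  have dg: "(g0 has_real_derivative w v) (at v within {0..1})" if v: "v \<in> {0..1}" for v
  proof -
    have "((\<lambda>v. \<phi> (F0 FL v)) has_real_derivative w v) (at v within {0..1})"
      using vder[OF n1 p2 FL1 C1' subL v] unfolding w_def
      by (simp add: has_real_derivative_iff_has_vector_derivative)
    then show ?thesis
      by (rule has_field_derivative_transform_within[where d=1]) (use v g0 in auto)
  qed
  have AS': "\<forall>v\<in>{0..1}. poly aL v * poly aR v > 0"
    "\<forall>v\<in>{0..1}. poly aR v *\<^sub>R Du (-1) FL (0, v) - poly aL v *\<^sub>R Du 0 FR (0, v)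
                  = (poly aR v * poly bL v - poly aL v * poly bR v) *\<^sub>R DF0 FL v"
    using AS unfolding AS_G1_def by auto
  have rel: "sL v = poly aL v * g1 v + poly bL v * w v \<and> sR v = poly aR v * g1 v + poly bR v * w v"
    if v: "v \<in> {0..1}" for v
  proof -
    define gr where "gr = G (F0 FL v)"
    define x where "x = gr \<bullet> dvec FL aL bL v"
    define y where "y = gr \<bullet> DF0 FL v"
    define uL where "uL = gr \<bullet> Du (-1) FL (0, v)"
    define uR where "uR = gr \<bullet> Du 0 FR (0, v)"
    have aL0: "poly aL v \<noteq> 0" using AS'(1) v by force
    have "x = (1 / poly aL v) * (uL - poly bL v * y)"
      unfolding x_def uL_def y_def dvec_def by (simp add: inner_diff_right)
    then have hL: "uL = poly aL v * x + poly bL v * y" using aL0 by (simp add: field_simps)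
    have "gr \<bullet> (poly aR v *\<^sub>R Du (-1) FL (0, v) - poly aL v *\<^sub>R Du 0 FR (0, v))
       = gr \<bullet> ((poly aR v * poly bL v - poly aL v * poly bR v) *\<^sub>R DF0 FL v)"
      using AS'(2) v by simp
    then have "poly aR v * uL - poly aL v * uR = (poly aR v * poly bL v - poly aL v * poly bR v) * y"
      unfolding uL_def uR_def y_def by (simp add: inner_diff_right)
    then have "poly aL v * uR = poly aL v * (poly aR v * x + poly bR v * y)"
      unfolding hL by (simp add: algebra_simps)
    then have hR: "uR = poly aR v * x + poly bR v * y" using aL0 by simp
    have "g1 v = x" using g1 v unfolding x_def gr_def by simp
    moreover have "sL v = uL" using sL(2) v unfolding uL_def gr_def F0_def by simp
    moreover have "sR v = uR" using sR(2) v eqLR unfolding uR_def gr_def F0_def by simp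
    moreover have "w v = y" unfolding w_def y_def gr_def ..
    ultimately show ?thesis using hL hR by simp
  qed
  show ?thesis using sg sL(1) sR(1) dg rel by blast
qed

theorem theorem2:
  fixes p :: nat
  assumes "p \<ge> 2"
  shows "\<exists>C::nat. \<forall>(n::nat) FL FR aL aR bL bR G0 G1.
     n \<ge> 1 \<and>
     patch p n (-1) FL \<and> patch p n 0 FR \<and>
     interior (FL ` rect (-1)) \<inter> interior (FR ` rect 0) = {} \<and>
     (\<forall>v\<in>{0..1}. FL (0, v) = FR (0, v)) \<and>
     AS_G1 FL FR aL aR bL bR \<and>
     lin_space G0 \<and> lin_space G1 \<and>
     G0 \<times> G1 \<subseteq> trace_space p n FL FR aL bL
     \<longrightarrow> ((bL \<noteq> 0 \<or> bR \<noteq> 0) \<longrightarrow> dim_atmost G0 C) \<and>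
         ((\<forall>c1 c2. smult c1 aL + smult c2 aR = 0 \<longrightarrow> c1 = 0 \<and> c2 = 0) \<longrightarrow> dim_atmost G1 C)"
proof (intro exI[of _ "2*p+2"] allI impI)
  fix n FL FR aL aR bL bR G0 G1
  assume H: "n \<ge> 1 \<and>
     patch p n (-1) FL \<and> patch p n 0 FR \<and>
     interior (FL ` rect (-1)) \<inter> interior (FR ` rect 0) = {} \<and>
     (\<forall>v\<in>{0..1}. FL (0, v) = FR (0, v)) \<and>
     AS_G1 FL FR aL aR bL bR \<and>
     lin_space G0 \<and> lin_space G1 \<and>
     G0 \<times> G1 \<subseteq> trace_space p n FL FR aL bL"
  have n1: "n \<ge> 1" and pL: "patch p n (-1) FL" and pR: "patch p n 0 FR"
    and eqLR: "\<forall>v\<in>{0..1}. FL (0, v) = FR (0, v)" and AS: "AS_G1 FL FR aL aR bL bR"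
    and L0: "lin_space G0" and L1: "lin_space G1" and sub: "G0 \<times> G1 \<subseteq> trace_space p n FL FR aL bL"
    using H by auto
  have degs: "degree aL \<le> 1" "degree aR \<le> 1" "degree bL \<le> 1" "degree bR \<le> 1"
    using AS unfolding AS_G1_def by auto
  have z0: "(\<lambda>x. 0) \<in> G0" "(\<lambda>x. 0) \<in> G1" using L0 L1 unfolding lin_space_def by auto
  note TF = trace_facts[OF n1 assms pL pR eqLR AS]
  have out: "g0 v = 0 \<and> g1 v = 0" if "(g0, g1) \<in> trace_space p n FL FR aL bL" "v \<notin> {0..1}" for g0 g1 v
    using that unfolding trace_space_def by auto
  have part1: "(bL \<noteq> 0 \<or> bR \<noteq> 0) \<longrightarrow> dim_atmost G0 (2*p+2)"
  proof
    assume bne: "bL \<noteq> 0 \<or> bR \<noteq> 0"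
    define \<beta> where "\<beta> = (if bL \<noteq> 0 then bL else bR)"
    have b0: "\<beta> \<noteq> 0" and db: "degree \<beta> \<le> 1" using bne degs unfolding \<beta>_def by auto
    show "dim_atmost G0 (2*p+2)"
    proof (rule dimL[where c="cc n \<beta>"], intro ballI conjI)
      fix g assume g: "g \<in> G0"
      then have tr: "(g, \<lambda>x. 0) \<in> trace_space p n FL FR aL bL" using sub z0 by blast
      show "\<forall>v. v \<notin> {0..1} \<longrightarrow> g v = 0" using out[OF tr] by blast
      obtain sL sR w where T: "spline1 p (p-1) n 0 g" "spline1 p (p-1) n 0 sL" "spline1 p (p-1) n 0 sR"
        "\<forall>v\<in>{0..1}. (g has_real_derivative w v) (at v within {0..1}) \<and>
        sL v = poly aL v * 0 + poly bL v * w v \<and> sR v = poly aR v * 0 + poly bR v * w v"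
        using TF[OF tr] by blast
      define s where "s = (if bL \<noteq> 0 then sL else sR)"
      have ss: "spline1 p (p-1) n 0 s" using T unfolding s_def by auto
      have Hs: "\<forall>v\<in>{0..1}. \<forall>D. (g has_real_derivative D) (at v within {0..1}) \<longrightarrow> s v = poly \<beta> v * D"
      proof (intro ballI allI impI)
        fix v D assume v: "v \<in> {0..1}" and D: "(g has_real_derivative D) (at v within {0..1})"
        have "D = w v" using deriv_unique01[OF D _ v] T(4) v by blast
        then show "s v = poly \<beta> v * D" using T(4) v unfolding s_def \<beta>_def by auto
      qed
      show "\<exists>A B. degree A \<le> p \<and> degree B \<le> p \<and>
           (\<forall>v\<in>{0..1}. g v = (if v \<le> cc n \<beta> then poly A v else poly B v))"
        using lemA[OF n1 assms b0 db T(1) ss Hs] .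
    qed
  qed
  have part2: "(\<forall>c1 c2. smult c1 aL + smult c2 aR = 0 \<longrightarrow> c1 = 0 \<and> c2 = 0) \<longrightarrow> dim_atmost G1 (2*p+2)"
  proof
    assume ind: "\<forall>c1 c2. smult c1 aL + smult c2 aR = 0 \<longrightarrow> c1 = 0 \<and> c2 = 0"
    show "dim_atmost G1 (2*p+2)"
    proof (rule dimL[where c=0], intro ballI conjI)
      fix g assume g: "g \<in> G1"
      then have tr: "(\<lambda>x. 0, g) \<in> trace_space p n FL FR aL bL" using sub z0 by blast
      show "\<forall>v. v \<notin> {0..1} \<longrightarrow> g v = 0" using out[OF tr] by blast
      obtain sL sR w where T: "spline1 p (p-1) n 0 sL" "spline1 p (p-1) n 0 sR"
        "\<forall>v\<in>{0..1}. ((\<lambda>x. 0) has_real_derivative w v) (at v within {0..1}) \<and>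
        sL v = poly aL v * g v + poly bL v * w v \<and> sR v = poly aR v * g v + poly bR v * w v"
        using TF[OF tr] by blast
      have w0: "w v = 0" if v: "v \<in> {0..1}" for v
        using deriv_unique01[of "\<lambda>x. 0" "w v" v 0] T(3) v by auto
      have "\<forall>v\<in>{0..1}. sL v = poly aL v * g v \<and> sR v = poly aR v * g v"
        using T(3) w0 by auto
      then obtain A where A: "degree A \<le> p" "\<forall>v\<in>{0..1}. g v = poly A v"
        using lemB[OF n1 assms degs(1,2) ind T(1,2)] by blast
      show "\<exists>A B. degree A \<le> p \<and> degree B \<le> p \<and>
           (\<forall>v\<in>{0..1}. g v = (if v \<le> 0 then poly A v else poly B v))"
        using A by auto
    qed
  qed
  show "((bL \<noteq> 0 \<or> bR \<noteq> 0) \<longrightarrow> dim_atmost G0 (2*p+2)) \<and>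
         ((\<forall>c1 c2. smult c1 aL + smult c2 aR = 0 \<longrightarrow> c1 = 0 \<and> c2 = 0) \<longrightarrow> dim_atmost G1 (2*p+2))"
    using part1 part2 by blast
qed

end
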